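(* Let $R$ be a complete discrete valuation ring of equal characteristic with maximal ideal $\mathfrak{p}$ and finite residue field $k=R/\mathfrak{p}$ with $|k|>9$, and let $n\ge2$. Then every closed normal subgroup $H$ of $\mathrm{SL}_n(R)$ whose image in $\mathrm{SL}_n(k)$ is all of $\mathrm{SL}_n(k)$ is equal to $\mathrm{SL}_n(R)$.
   Context: The topology on $\mathrm{SL}_n(R)$ is the one induced by $R$. *)

theory Defs
  imports "HOL-Analysis.Analysis" "HOL-Algebra.Coset"
begin

text \<open>Its maximal ideal is
  \<pi>R (= the set of non-units).\<close>
definition dvr_uniformizer :: "'a::idom \<Rightarrow> bool" where
  "dvr_uniformizer \<pi> \<longleftrightarrow> \<pi> \<noteq> 0 \<and> \<not> \<pi> dvd 1 \<and>
     (\<forall>x. x \<noteq> 0 \<longrightarrow> (\<exists>u n. u dvd 1 \<and> x = u * \<pi> ^ n))"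

definition padic_complete :: "'a::idom \<Rightarrow> bool" where
  "padic_complete \<pi> \<longleftrightarrow>
     (\<forall>x :: nat \<Rightarrow> 'a.
        (\<forall>m. \<exists>N. \<forall>i\<ge>N. \<forall>j\<ge>N. \<pi> ^ m dvd (x i - x j)) \<longrightarrow>
        (\<exists>L. \<forall>m. \<exists>N. \<forall>i\<ge>N. \<pi> ^ m dvd (x i - L)))"

definition residue_field :: "'a::idom \<Rightarrow> 'a set set" where
  "residue_field \<pi> = (\<lambda>x. {y. \<pi> dvd (y - x)}) ` UNIV"

text \<open>Equal characteristic: char R = char k, i.e. the kernels of Z \<rightarrow> R and Z \<rightarrow> k coincide.\<close>
definition equal_char :: "'a::idom \<Rightarrow> bool" where
  "equal_char \<pi> \<longleftrightarrow> (\<forall>m::nat. \<pi> dvd (of_nat m :: 'a) \<longleftrightarrow> (of_nat m :: 'a) = 0)"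

text \<open>The group SL_n(R), n = CARD('n).\<close>
definition SL :: "('a::comm_ring_1 ^ 'n ^ 'n) monoid" where
  "SL = \<lparr>carrier = {A. det A = 1}, mult = (**), one = mat 1\<rparr>"

text \<open>Closedness in SL_n(R) for the topology induced by the \<pi>-adic topology of R
  (entrywise congruence modulo \<pi>^m gives a basis of neighbourhoods).\<close>
definition SL_closed :: "'a::comm_ring_1 \<Rightarrow> ('a ^ 'n ^ 'n) set \<Rightarrow> bool" where
  "SL_closed \<pi> H \<longleftrightarrow>
     (\<forall>A. det A = 1 \<longrightarrow>
        (\<forall>m. \<exists>h\<in>H. \<forall>i j. \<pi> ^ m dvd (A $ i $ j - h $ i $ j)) \<longrightarrow> A \<in> H)"

text \<open>The image of H under reduction SL_n(R) \<rightarrow> SL_n(k) is all of SL_n(k): every matrix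
  over k of determinant 1 (i.e. the reduction of some C over R with det C \<equiv> 1 mod \<pi>)
  is the reduction of an element of H.\<close>
definition surj_mod :: "'a::comm_ring_1 \<Rightarrow> ('a ^ 'n ^ 'n) set \<Rightarrow> bool" where
  "surj_mod \<pi> H \<longleftrightarrow>
     (\<forall>C. \<pi> dvd (det C - 1) \<longrightarrow> (\<exists>h\<in>H. \<forall>i j. \<pi> dvd (C $ i $ j - h $ i $ j)))"

end

theory Submission imports Defs begin

definition mc :: "'a::comm_ring_1 \<Rightarrow> 'a^'n^'n \<Rightarrow> 'a^'n^'n \<Rightarrow> bool" where
  "mc q A B \<longleftrightarrow> (\<forall>i j. q dvd (A$i$j - B$i$j))"

definition sm :: "'a::comm_ring_1 \<Rightarrow> 'a^'n^'n \<Rightarrow> 'a^'n^'n" where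
  "sm c A = (\<chi> i j. c * A$i$j)"

definition EE :: "'n \<Rightarrow> 'n \<Rightarrow> 'a::comm_ring_1^'n^'n" where
  "EE k l = (\<chi> r s. if r = k \<and> s = l then 1 else 0)"

definition dg :: "('n \<Rightarrow> 'a::comm_ring_1) \<Rightarrow> 'a^'n^'n" where
  "dg d = (\<chi> i j. if i = j then d i else 0)"

lemma mm_comp: "(A ** B)$i$j = (\<Sum>k\<in>UNIV. A$i$k * B$k$j)"
  by (simp add: matrix_matrix_mult_def)

lemma sm_comp[simp]: "sm c A $i$j = c * A$i$j" by (simp add: sm_def)
lemma EE_comp[simp]: "EE k l $r$s = (if r = k \<and> s = l then 1 else 0)" by (simp add: EE_def)
lemma dg_comp[simp]: "dg d $i$j = (if i = j then d i else 0)" by (simp add: dg_def)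
lemma mat_comp[simp]: "mat c $i$j = (if i = j then c else 0)" by (simp add: mat_def)

lemma dg_mult[simp]: "(dg d ** A)$i$j = d i * A$i$j"
proof -
  have "(dg d ** A)$i$j = (\<Sum>k\<in>UNIV. if k = i then d i * A$i$j else 0)"
    unfolding mm_comp by (rule sum.cong) auto
  then show ?thesis by simp
qed
lemma mult_dg[simp]: "(A ** dg d)$i$j = A$i$j * d j"
proof -
  have "(A ** dg d)$i$j = (\<Sum>k\<in>UNIV. if k = j then A$i$j * d j else 0)"
    unfolding mm_comp by (rule sum.cong) auto
  then show ?thesis by simp
qed
lemma EE_mult[simp]: "((EE k l :: 'a::comm_ring_1^'n^'n) ** A)$i$j = (if i = k then A$l$j else 0)"
proof -
  have "((EE k l :: 'a::comm_ring_1^'n^'n) ** A)$i$j = (\<Sum>r\<in>UNIV. if r = l then (if i = k then A$l$j else 0) else 0)"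
    unfolding mm_comp by (rule sum.cong) auto
  then show ?thesis by simp
qed
lemma mult_EE[simp]: "(A ** (EE k l :: 'a::comm_ring_1^'n^'n))$i$j = (if j = l then A$i$k else 0)"
proof -
  have "(A ** (EE k l :: 'a::comm_ring_1^'n^'n))$i$j = (\<Sum>r\<in>UNIV. if r = k then (if j = l then A$i$k else 0) else 0)"
    unfolding mm_comp by (rule sum.cong) auto
  then show ?thesis by simp
qed
lemma sm_0[simp]: "sm c 0 = 0" by (simp add: vec_eq_iff)
lemma mat_sm: "mat c = sm c (mat 1)" by (simp add: vec_eq_iff)

lemma sm_mult[simp]: "sm c A ** B = sm c (A ** B)"
  by (simp add: vec_eq_iff mm_comp sum_distrib_left mult.assoc)
lemma mult_sm[simp]: "A ** sm c B = sm c (A ** B)"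
  by (simp add: vec_eq_iff mm_comp sum_distrib_left mult_ac)
lemma sm_sm[simp]: "sm c (sm d A) = sm (c*d) A"
  by (simp add: vec_eq_iff mult.assoc)
lemma sm_add: "sm c (A + B) = sm c A + sm c B"
  by (simp add: vec_eq_iff algebra_simps)
lemma sm_diff: "sm c (A - B) = sm c A - sm c B"
  by (simp add: vec_eq_iff algebra_simps)

lemma mm_rdistrib: "(A + B) ** C = A ** C + B ** (C::'a::comm_ring_1^'n^'n)"
  by (simp add: vec_eq_iff mm_comp algebra_simps sum.distrib)
lemma mm_diff_l: "A ** (B - C) = A ** B - A ** (C::'a::comm_ring_1^'n^'n)"
  by (simp add: vec_eq_iff mm_comp algebra_simps sum_subtractf)
lemma mm_diff_r: "(A - B) ** C = A ** C - B ** (C::'a::comm_ring_1^'n^'n)"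
  by (simp add: vec_eq_iff mm_comp algebra_simps sum_subtractf)

lemma mc_refl[simp]: "mc q A A" by (simp add: mc_def)
lemma mc_sym: "mc q A B \<Longrightarrow> mc q B A"
  unfolding mc_def by (metis dvd_minus_iff minus_diff_eq)
lemma mc_trans: "mc q A B \<Longrightarrow> mc q B C \<Longrightarrow> mc q A C"
proof -
  assume a: "mc q A B" "mc q B C"
  { fix i j
    have "A$i$j - C$i$j = (A$i$j - B$i$j) + (B$i$j - C$i$j)" by simp
    then have "q dvd (A$i$j - C$i$j)" using a unfolding mc_def by (metis dvd_add) }
  then show ?thesis unfolding mc_def by blast
qed
lemma mc_add: "mc q A A' \<Longrightarrow> mc q B B' \<Longrightarrow> mc q (A+B) (A'+B')"
  unfolding mc_def by (simp add: add_diff_add dvd_add)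
lemma mc_diff: "mc q A A' \<Longrightarrow> mc q B B' \<Longrightarrow> mc q (A-B) (A'-B')"
proof -
  assume a: "mc q A A'" "mc q B B'"
  { fix i j
    have "(A-B)$i$j - (A'-B')$i$j = (A$i$j - A'$i$j) - (B$i$j - B'$i$j)" by simp
    then have "q dvd ((A-B)$i$j - (A'-B')$i$j)" using a unfolding mc_def by (metis dvd_diff) }
  then show ?thesis unfolding mc_def by blast
qed
lemma mc_dvd: "q' dvd q \<Longrightarrow> mc q A B \<Longrightarrow> mc q' A B"
  unfolding mc_def using dvd_trans by blast
lemma mc_sm: "mc q A B \<Longrightarrow> mc (c*q) (sm c A) (sm c B)"
  unfolding mc_def by (simp add: right_diff_distrib[symmetric] mult_dvd_mono)
lemma mc_sm0: "q dvd c \<Longrightarrow> mc q (sm c A) 0"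
  unfolding mc_def by simp
lemma mc_multl: "mc q A B \<Longrightarrow> mc q (C ** A) (C ** B)"
  unfolding mc_def mm_comp by (simp add: sum_subtractf[symmetric] right_diff_distrib[symmetric] dvd_sum)
lemma mc_multr: "mc q A B \<Longrightarrow> mc q (A ** C) (B ** C)"
  unfolding mc_def mm_comp by (simp add: sum_subtractf[symmetric] left_diff_distrib[symmetric] dvd_sum)
lemma mc_mult: "mc q A A' \<Longrightarrow> mc q B B' \<Longrightarrow> mc q (A ** B) (A' ** B')"
  by (meson mc_multl mc_multr mc_trans)

lemma mc_inv:
  fixes g gi C Ci :: "'a::comm_ring_1^'n^'n"
  assumes "mc q g C" "gi ** g = mat 1" "C ** Ci = mat 1"
  shows "mc q gi Ci"
proof -
  have "gi = (gi ** C) ** Ci" using assms(3) by (simp add: matrix_mul_assoc[symmetric])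
  moreover have "mc q ((gi ** C) ** Ci) ((gi ** g) ** Ci)"
    by (rule mc_multr, rule mc_multl, rule mc_sym, rule assms(1))
  ultimately show ?thesis using assms(2) by simp
qed

lemma comm_identity:
  fixes g gi E :: "'a::comm_ring_1^'n^'n"
  assumes "g ** gi = mat 1"
  shows "g ** (mat 1 + sm s E) ** gi ** (mat 1 - sm s E)
     = mat 1 + sm s (g ** E ** gi - E) - sm (s * s) (g ** E ** gi ** E)"
proof -
  have 1: "g ** (mat 1 + sm s E) ** gi = mat 1 + sm s (g ** E ** gi)"
    using assms by (simp add: matrix_add_ldistrib mm_rdistrib)
  show ?thesis unfolding 1
    by (simp add: mm_diff_l mm_rdistrib sm_diff sm_add matrix_mul_assoc algebra_simps)
qed

lemma comm_cong:
  fixes g gi E C Ci :: "'a::comm_ring_1^'n^'n"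
  assumes "g ** gi = mat 1" "mc p g C" "mc p gi Ci" "m \<ge> 1"
  shows "mc (p^(m+1)) (g ** (mat 1 + sm (p^m) E) ** gi ** (mat 1 - sm (p^m) E))
           (mat 1 + sm (p^m) (C ** E ** Ci - E))"
proof -
  have a: "mc p (g ** E ** gi) (C ** E ** Ci)"
    using assms by (meson mc_mult mc_refl)
  have b: "mc (p^m * p) (sm (p^m) (g ** E ** gi - E)) (sm (p^m) (C ** E ** Ci - E))"
    by (rule mc_sm, rule mc_diff[OF a mc_refl])
  have c: "mc (p^(m+1)) (sm (p^m*p^m) (g ** E ** gi ** E)) 0"
  proof (rule mc_sm0)
    have "p^(m+1) dvd p^(m+m)" using assms(4) by (intro le_imp_power_dvd) simp
    then show "p^(m+1) dvd p^m*p^m" by (simp add: power_add)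
  qed
  have "mc (p^(m+1)) (mat 1 + sm (p^m) (g ** E ** gi - E) - sm (p^m*p^m) (g ** E ** gi ** E))
          (mat 1 + sm (p^m) (C ** E ** Ci - E) - 0)"
    using b c by (intro mc_diff mc_add) (simp_all add: power_Suc2 mult.commute)
  then show ?thesis using comm_identity[OF assms(1)] by simp
qed

lemma SL_group_facts:
  assumes N: "normal H (SL :: ('a::comm_ring_1^'n^'n) monoid)"
  shows "group (SL :: ('a::comm_ring_1^'n^'n) monoid)" "subgroup H (SL :: ('a::comm_ring_1^'n^'n) monoid)"
  using N normal_imp_subgroup normal.axioms(2) by blast+

lemma SL_simps[simp]: "carrier SL = {A. det A = 1}" "mult SL = (**)" "one SL = mat 1"
  by (simp_all add: SL_def)

lemma SL_inv:
  assumes "group (SL :: ('a::comm_ring_1^'n^'n) monoid)" "det (g::'a^'n^'n) = 1"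
  shows "g ** inv\<^bsub>SL\<^esub> g = mat 1" "inv\<^bsub>SL\<^esub> g ** g = mat 1" "det (inv\<^bsub>SL\<^esub> g) = 1"
proof -
  interpret group "SL :: ('a::comm_ring_1^'n^'n) monoid" by fact
  have g: "g \<in> carrier SL" using assms by simp
  show "g ** inv\<^bsub>SL\<^esub> g = mat 1" using r_inv[OF g] by simp
  show "inv\<^bsub>SL\<^esub> g ** g = mat 1" using l_inv[OF g] by simp
  show "det (inv\<^bsub>SL\<^esub> g) = 1" using inv_closed[OF g] by simp
qed

lemma comm_in_H:
  assumes N: "normal H (SL :: ('a::comm_ring_1^'n^'n) monoid)"
    and g: "g \<in> H" and x: "det x = 1" "x ** xi = mat 1" "xi ** x = (mat 1::'a^'n^'n)"
  shows "g ** x ** inv\<^bsub>SL\<^esub> g ** xi \<in> H"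
proof -
  interpret G: group "SL :: ('a::comm_ring_1^'n^'n) monoid" using SL_group_facts[OF N] by blast
  interpret subgroup H "SL :: ('a::comm_ring_1^'n^'n) monoid" using SL_group_facts[OF N] by blast
  have xc: "x \<in> carrier SL" using x by simp
  have xi: "inv\<^bsub>SL\<^esub> x = xi"
    using G.inv_equality[of xi x] x xc
    by (metis G.inv_closed G.inv_inv G.l_inv G.r_inv SL_simps(2) SL_simps(3) matrix_mul_assoc matrix_mul_lid matrix_mul_rid)
  have gi: "inv\<^bsub>SL\<^esub> g \<in> H" using g by (rule m_inv_closed)
  have "x \<otimes>\<^bsub>SL\<^esub> inv\<^bsub>SL\<^esub> g \<otimes>\<^bsub>SL\<^esub> inv\<^bsub>SL\<^esub> x \<in> H"
    using N xc gi by (simp add: G.normal_inv_iff)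
  then have "g \<otimes>\<^bsub>SL\<^esub> (x \<otimes>\<^bsub>SL\<^esub> inv\<^bsub>SL\<^esub> g \<otimes>\<^bsub>SL\<^esub> inv\<^bsub>SL\<^esub> x) \<in> H"
    using g by (rule m_closed[rotated])
  then show ?thesis using xi by (simp add: matrix_mul_assoc)
qed


definition Sm :: "'a::comm_ring_1 \<Rightarrow> ('a^'n^'n) set \<Rightarrow> nat \<Rightarrow> 'a^'n^'n \<Rightarrow> bool" where
  "Sm p H m Y \<longleftrightarrow> (\<exists>h\<in>H. mc (p^(m+1)) h (mat 1 + sm (p^m) Y))"

lemma Sm_resp: "Sm p H m Y \<Longrightarrow> mc p Y Y' \<Longrightarrow> Sm p H m Y'"
proof -
  assume "Sm p H m Y" "mc p Y Y'"
  then obtain h where h: "h \<in> H" "mc (p^(m+1)) h (mat 1 + sm (p^m) Y)" unfolding Sm_def by blast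
  have "mc (p^m * p) (mat 1 + sm (p^m) Y) (mat 1 + sm (p^m) Y')"
    by (rule mc_add[OF mc_refl], rule mc_sm, fact)
  then have "mc (p^(m+1)) h (mat 1 + sm (p^m) Y')"
    using h(2) mc_trans by (metis power_Suc2 Suc_eq_plus1)
  then show ?thesis using h(1) unfolding Sm_def by blast
qed

lemma Sm_eq: "Sm p H m Y \<Longrightarrow> Y = Y' \<Longrightarrow> Sm p H m Y'" by simp

lemma Sm_0:
  assumes N: "normal H (SL :: ('a::comm_ring_1^'n^'n) monoid)"
  shows "Sm p H m (0::'a^'n^'n)"
proof -
  interpret subgroup H "SL :: ('a::comm_ring_1^'n^'n) monoid" using SL_group_facts[OF N] by blast
  have "mat 1 \<in> H" using one_closed by simp
  then show ?thesis unfolding Sm_def by (intro bexI[of _ "mat 1"]) (auto simp: mc_def)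
qed

lemma Sm_add:
  assumes N: "normal H (SL :: ('a::comm_ring_1^'n^'n) monoid)" and m: "m \<ge> 1"
    and a: "Sm p H m Y1" "Sm p H m (Y2::'a^'n^'n)"
  shows "Sm p H m (Y1 + Y2)"
proof -
  interpret subgroup H "SL :: ('a::comm_ring_1^'n^'n) monoid" using SL_group_facts[OF N] by blast
  obtain h1 where h1: "h1 \<in> H" "mc (p^(m+1)) h1 (mat 1 + sm (p^m) Y1)" using a unfolding Sm_def by blast
  obtain h2 where h2: "h2 \<in> H" "mc (p^(m+1)) h2 (mat 1 + sm (p^m) Y2)" using a unfolding Sm_def by blast
  have hh: "h1 ** h2 \<in> H" using m_closed[OF h1(1) h2(1)] by simp
  have e: "(mat 1 + sm (p^m) Y1) ** (mat 1 + sm (p^m) Y2) = mat 1 + sm (p^m) (Y1 + Y2) + sm (p^m * p^m) (Y1 ** Y2)"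
    by (simp add: matrix_add_ldistrib mm_rdistrib sm_add algebra_simps)
  have c: "mc (p^(m+1)) (sm (p^m*p^m) (Y1 ** Y2)) 0"
  proof (rule mc_sm0)
    have "p^(m+1) dvd p^(m+m)" using m by (intro le_imp_power_dvd) simp
    then show "p^(m+1) dvd p^m*p^m" by (simp add: power_add)
  qed
  have "mc (p^(m+1)) (h1 ** h2) (mat 1 + sm (p^m) (Y1 + Y2) + 0)"
    using mc_mult[OF h1(2) h2(2)] mc_add[OF mc_refl c] unfolding e using mc_trans by blast
  then show ?thesis using hh unfolding Sm_def by auto
qed

lemma Sm_sum:
  assumes N: "normal H (SL :: ('a::comm_ring_1^'n^'n) monoid)" and m: "m \<ge> 1"
  shows "finite F \<Longrightarrow> (\<And>x. x \<in> F \<Longrightarrow> Sm p H m (f x :: 'a^'n^'n)) \<Longrightarrow> Sm p H m (sum f F)"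
proof (induction F rule: finite_induct)
  case empty then show ?case using Sm_0[OF N] by simp
next
  case (insert x F) then show ?case using Sm_add[OF N m] by simp
qed

lemma det_elem:
  fixes t :: "'a::comm_ring_1"
  assumes "i \<noteq> j"
  shows "det (mat 1 + sm t (EE i j) :: 'a^'n^'n) = 1"
proof -
  have "(mat 1 + sm t (EE i j) :: 'a^'n^'n) = (\<chi> k. if k = i then row i (mat 1) + t *s row j (mat 1) else row k (mat 1))"
    using assms by (auto simp: vec_eq_iff row_def)
  then show ?thesis using det_row_operation[OF assms, of "mat 1" t] by simp
qed

lemma EE_sq: "i \<noteq> j \<Longrightarrow> (EE i j :: 'a::comm_ring_1^'n^'n) ** EE i j = 0"
  by (simp add: vec_eq_iff)

lemma Sm_gen:
  fixes C Ci E :: "'a::comm_ring_1^'n^'n"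
  assumes N: "normal H (SL :: ('a::comm_ring_1^'n^'n) monoid)" and m: "m \<ge> 1"
    and g: "g \<in> H" "mc p g C" and CC: "C ** Ci = mat 1"
    and E: "E ** E = 0" "det (mat 1 + sm (p^m) E) = 1"
  shows "Sm p H m (C ** E ** Ci - E)"
proof -
  have G: "group (SL :: ('a::comm_ring_1^'n^'n) monoid)" using SL_group_facts[OF N] by blast
  have sub: "subgroup H (SL :: ('a::comm_ring_1^'n^'n) monoid)" using SL_group_facts[OF N] by blast
  have dg: "det g = 1" using g(1) subgroup.subset[OF sub] by auto
  note gi = SL_inv[OF G dg]
  have x1: "(mat 1 + sm (p^m) E) ** (mat 1 - sm (p^m) E) = mat 1"
    by (simp add: matrix_add_ldistrib mm_diff_l mm_rdistrib E(1))
  have x2: "(mat 1 - sm (p^m) E) ** (mat 1 + sm (p^m) E) = mat 1"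
    by (simp add: matrix_add_ldistrib mm_diff_r mm_rdistrib E(1))
  have inH: "g ** (mat 1 + sm (p^m) E) ** inv\<^bsub>SL\<^esub> g ** (mat 1 - sm (p^m) E) \<in> H"
    by (rule comm_in_H[OF N g(1) E(2) x1 x2])
  have "mc p (inv\<^bsub>SL\<^esub> g) Ci" by (rule mc_inv[OF g(2) gi(2) CC])
  from comm_cong[OF gi(1) g(2) this m, of E] inH show ?thesis unfolding Sm_def by blast
qed


lemma Sm_EE:
  assumes N: "normal H (SL :: ('a::comm_ring_1^'n^'n) monoid)" and m: "m \<ge> 1"
    and surj: "surj_mod p H" and ij: "i \<noteq> j" and ab: "a0 * b0 = (1::'a)" and u: "(a0*a0 - 1) * w = 1"
  shows "Sm p H m (sm c (EE i j) :: 'a^'n^'n)"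
proof -
  define C :: "'a^'n^'n" where "C = dg (\<lambda>k. if k = i then a0 else if k = j then b0 else 1)"
  define Ci :: "'a^'n^'n" where "Ci = dg (\<lambda>k. if k = i then b0 else if k = j then a0 else 1)"
  have pr: "(\<Prod>k\<in>UNIV. if k = i then a0 else if k = j then b0 else 1) = a0 * b0"
  proof -
    have "(\<Prod>k\<in>UNIV. if k = i then a0 else if k = j then b0 else 1)
        = (\<Prod>k\<in>UNIV. (if k = i then a0 else 1) * (if k = j then b0 else 1))"
      using ij by (intro prod.cong) auto
    also have "\<dots> = a0 * b0" by (simp add: prod.distrib)
    finally show ?thesis .
  qed
  have dC: "det C = 1" unfolding C_def using pr ab by (subst det_diagonal) auto
  obtain g where g: "g \<in> H" "\<forall>i j. p dvd (C$i$j - g$i$j)"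
  proof -
    have "p dvd (det C - 1)" using dC by simp
    then show ?thesis using surj that unfolding surj_mod_def by blast
  qed
  have gC: "mc p g C" using g(2) mc_sym unfolding mc_def by blast
  have CC: "C ** Ci = mat 1" unfolding C_def Ci_def using ab
    by (auto simp: vec_eq_iff mult.commute)
  define E :: "'a^'n^'n" where "E = sm (c*w) (EE i j)"
  have E1: "E ** E = 0" unfolding E_def by (simp add: EE_sq[OF ij])
  have E2: "det (mat 1 + sm (p^m) E) = 1" unfolding E_def using det_elem[OF ij] by simp
  have cw: "c*w*(a0*a0-1) = c" using u by (metis mult.assoc mult.commute mult_1_right)
  have eq: "C ** E ** Ci - E = sm c (EE i j)"
    unfolding C_def Ci_def E_def using ij cw by (auto simp: vec_eq_iff algebra_simps)
  show ?thesis using Sm_gen[OF N m g(1) gC CC E1 E2] eq by simp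
qed

lemma Sm_diag:
  assumes N: "normal H (SL :: ('a::comm_ring_1^'n^'n) monoid)" and m: "m \<ge> 1"
    and surj: "surj_mod p H" and ij: "i \<noteq> j"
    and el: "\<And>c k l. k \<noteq> l \<Longrightarrow> Sm p H m (sm c (EE k l) :: 'a^'n^'n)"
  shows "Sm p H m (sm c (EE j j - EE i i) :: 'a^'n^'n)"
proof -
  define C :: "'a^'n^'n" where "C = mat 1 + sm 1 (EE j i)"
  define Ci :: "'a^'n^'n" where "Ci = mat 1 + sm (-1) (EE j i)"
  have ji: "j \<noteq> i" using ij by simp
  have dC: "det C = 1" unfolding C_def by (rule det_elem[OF ji])
  obtain g where g: "g \<in> H" "\<forall>i j. p dvd (C$i$j - g$i$j)"
  proof -
    have "p dvd (det C - 1)" using dC by simp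
    then show ?thesis using surj that unfolding surj_mod_def by blast
  qed
  have gC: "mc p g C" using g(2) mc_sym unfolding mc_def by blast
  have CC: "C ** Ci = mat 1" unfolding C_def Ci_def
    by (simp add: matrix_add_ldistrib mm_rdistrib EE_sq[OF ji] vec_eq_iff)
  define E :: "'a^'n^'n" where "E = sm c (EE i j)"
  have E1: "E ** E = 0" unfolding E_def by (simp add: EE_sq[OF ij])
  have E2: "det (mat 1 + sm (p^m) E) = 1" unfolding E_def using det_elem[OF ij] by simp
  have eq: "C ** E ** Ci - E = sm c (EE j j - EE i i - EE j i)"
    unfolding C_def Ci_def E_def using ij
    by (auto simp: vec_eq_iff algebra_simps matrix_add_ldistrib mm_rdistrib)
  have "Sm p H m (sm c (EE j j - EE i i - EE j i) + sm c (EE j i))"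
    using Sm_add[OF N m Sm_gen[OF N m g(1) gC CC E1 E2] el[OF ji]] eq by simp
  then show ?thesis by (rule Sm_eq) (simp add: vec_eq_iff algebra_simps)
qed


lemma sum_if_cond: "(\<Sum>s\<in>A. if P then f s else 0) = (if P then sum f A else 0)"
  by simp

lemma Sm_traceless:
  assumes N: "normal H (SL :: ('a::comm_ring_1^'n^'n) monoid)" and m: "m \<ge> 1"
    and surj: "surj_mod p H"
    and el: "\<And>c k l. k \<noteq> l \<Longrightarrow> Sm p H m (sm c (EE k l) :: 'a^'n^'n)"
    and tr: "p dvd trace (Y::'a^'n^'n)"
  shows "Sm p H m Y"
proof -
  define i0 :: 'n where "i0 = undefined"
  define F1 :: "'n \<Rightarrow> 'n \<Rightarrow> 'a^'n^'n" where "F1 r s = (if r = s then 0 else sm (Y$r$s) (EE r s))" for r s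
  define F2 :: "'n \<Rightarrow> 'a^'n^'n" where "F2 r = sm (Y$r$r) (EE r r - EE i0 i0)" for r
  have S1: "Sm p H m (\<Sum>r\<in>UNIV. \<Sum>s\<in>UNIV. F1 r s)"
    by (intro Sm_sum[OF N m]) (auto simp: F1_def Sm_0[OF N] el)
  have S2: "Sm p H m (\<Sum>r\<in>UNIV. F2 r)"
  proof (intro Sm_sum[OF N m])
    fix r show "Sm p H m (F2 r)"
    proof (cases "r = i0")
      case True then show ?thesis using Sm_0[OF N] by (simp add: F2_def)
    next
      case False then show ?thesis unfolding F2_def by (intro Sm_diag[OF N m surj _ el]) auto
    qed
  qed simp
  have c1: "(\<Sum>r\<in>UNIV. \<Sum>s\<in>UNIV. F1 r s)$a$b = (if a = b then 0 else Y$a$b)" for a b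
  proof -
    have "(\<Sum>r\<in>UNIV. \<Sum>s\<in>UNIV. F1 r s)$a$b = (\<Sum>r\<in>UNIV. \<Sum>s\<in>UNIV. (F1 r s)$a$b)" by simp
    also have "\<dots> = (\<Sum>r\<in>UNIV. \<Sum>s\<in>UNIV. if r = a then (if s = b then (if a = b then 0 else Y$a$b) else 0) else 0)"
      by (intro sum.cong refl) (auto simp: F1_def)
    also have "\<dots> = (if a = b then 0 else Y$a$b)" by (simp add: sum_if_cond)
    finally show ?thesis .
  qed
  have c2: "(\<Sum>r\<in>UNIV. F2 r)$a$b = (if a = b then Y$a$a else 0) - (if a = i0 \<and> b = i0 then trace Y else 0)" for a b
  proof -
    have "(\<Sum>r\<in>UNIV. F2 r)$a$b = (\<Sum>r\<in>UNIV. (F2 r)$a$b)" by simp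
    also have "\<dots> = (\<Sum>r\<in>UNIV. (if r = a then (if a = b then Y$a$a else 0) else 0) - Y$r$r * (if a = i0 \<and> b = i0 then 1 else 0))"
      by (intro sum.cong refl) (auto simp: F2_def algebra_simps)
    also have "\<dots> = (if a = b then Y$a$a else 0) - trace Y * (if a = i0 \<and> b = i0 then 1 else 0)"
      by (simp add: sum_subtractf sum_distrib_right[symmetric] trace_def)
    finally show ?thesis by simp
  qed
  have "mc p ((\<Sum>r\<in>UNIV. \<Sum>s\<in>UNIV. F1 r s) + (\<Sum>r\<in>UNIV. F2 r)) Y"
    unfolding mc_def using tr by (auto simp del: sum_component simp add: c1 c2)
  then show ?thesis using Sm_add[OF N m S1 S2] Sm_resp by blast
qed


lemma prod_lin:
  fixes s :: "'a::comm_ring_1"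
  shows "finite S \<Longrightarrow> s * s dvd ((\<Prod>i\<in>S. 1 + s * f i) - (1 + s * (\<Sum>i\<in>S. f i)))"
proof (induction S rule: finite_induct)
  case empty then show ?case by simp
next
  case (insert x F)
  then obtain k where k: "(\<Prod>i\<in>F. 1 + s * f i) - (1 + s * (\<Sum>i\<in>F. f i)) = s * s*k"
    by (auto elim: dvdE)
  define P where "P = (\<Prod>i\<in>F. 1 + s * f i)"
  define T where "T = (\<Sum>i\<in>F. f i)"
  have P: "P = 1 + s*T + s * s*k" using k unfolding P_def T_def by (simp add: algebra_simps)
  have "(1 + s * f x) * P - (1 + s * (f x + T)) = s * s*(f x * T + k + s * f x * k)"
    unfolding P by (simp add: algebra_simps)
  then show ?case using insert unfolding P_def T_def by (simp add: dvd_def) blast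
qed

lemma prod_two:
  fixes f :: "'b \<Rightarrow> 'a::comm_ring_1"
  assumes "finite S" "i \<in> S" "k \<in> S" "i \<noteq> k" "s dvd f i" "s dvd f k"
  shows "s * s dvd prod f S"
proof -
  have "prod f S = f i * prod f (S - {i})" using assms by (simp add: prod.remove)
  also have "prod f (S - {i}) = f k * prod f (S - {i} - {k})" using assms by (intro prod.remove) auto
  finally have "prod f S = (f i * f k) * prod f (S - {i} - {k})" by (simp add: mult.assoc)
  then show ?thesis using assms by (simp add: mult_dvd_mono)
qed

lemma det_lin:
  fixes Y :: "'a::comm_ring_1^'n^'n"
  shows "s * s dvd (det (mat 1 + sm s Y) - (1 + s * trace Y))"
proof -
  define P where "P = {p. p permutes (UNIV::'n set)}"
  define t where "t p = of_int (sign p) * (\<Prod>i\<in>UNIV. (mat 1 + sm s Y)$i$p i)" for p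
  have fP: "finite P" unfolding P_def by (simp add: finite_permutations)
  have idP: "id \<in> P" unfolding P_def by (simp add: permutes_id)
  have d: "det (mat 1 + sm s Y) = t id + sum t (P - {id})"
    unfolding det_def P_def[symmetric] t_def[symmetric] using fP idP by (simp add: sum.remove)
  have tid: "t id = (\<Prod>i\<in>UNIV. 1 + s * Y$i$i)" unfolding t_def by (simp add: sign_id)
  have o: "s * s dvd t p" if p: "p \<in> P - {id}" for p
  proof -
    have pp: "p permutes UNIV" using p unfolding P_def by simp
    obtain i where i: "p i \<noteq> i" using p by (auto simp: fun_eq_iff)
    have inj: "inj p" using pp by (rule permutes_inj)
    have i2: "p (p i) \<noteq> p i" using i inj by (metis injD)
    have "s * s dvd (\<Prod>i\<in>UNIV. (mat 1 + sm s Y)$i$p i)"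
      by (rule prod_two[of UNIV i "p i"]) (use i i2 in auto)
    then show ?thesis unfolding t_def by simp
  qed
  have "s * s dvd sum t (P - {id})" using o by (intro dvd_sum) blast
  moreover have "s * s dvd (t id - (1 + s * trace Y))"
    unfolding tid trace_def by (rule prod_lin) simp
  ultimately have "s * s dvd (t id - (1 + s * trace Y)) + sum t (P - {id})" by simp
  then show ?thesis unfolding d by (simp add: algebra_simps)
qed


lemma dvr_unit:
  assumes "dvr_uniformizer (p::'a::idom)" "\<not> p dvd x"
  shows "x dvd 1"
proof -
  have "x \<noteq> 0" using assms(2) by auto
  then obtain u n where un: "u dvd 1" "x = u * p^n" using assms(1) unfolding dvr_uniformizer_def by blast
  show ?thesis
  proof (cases n)
    case 0 then show ?thesis using un by simp
  next
    case (Suc k) then have "p dvd x" using un by simp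
    then show ?thesis using assms(2) by simp
  qed
qed

lemma dvr_prime:
  fixes x y :: "'a::idom"
  assumes "dvr_uniformizer (p::'a)" "p dvd x * y"
  shows "p dvd x \<or> p dvd y"
proof (rule ccontr)
  assume "\<not> (p dvd x \<or> p dvd y)"
  then have "x dvd 1" "y dvd 1" using dvr_unit[OF assms(1)] by blast+
  then have "x * y dvd 1" using mult_dvd_mono[of x 1 y 1] by simp
  then have "p dvd 1" using assms(2) dvd_trans by blast
  then show False using assms(1) unfolding dvr_uniformizer_def by simp
qed

lemma exists_a0:
  assumes U: "dvr_uniformizer (p::'a::idom)" and F: "finite (residue_field p)" and C: "card (residue_field p) > 3"
  shows "\<exists>a0. \<not> p dvd a0 \<and> \<not> p dvd (a0*a0 - 1)"
proof (rule ccontr)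
  assume na: "\<not> ?thesis"
  have all: "p dvd x \<or> p dvd (x - 1) \<or> p dvd (x + 1)" for x
  proof -
    have "p dvd x \<or> p dvd (x*x - 1)" using na by blast
    moreover have "x*x - 1 = (x - 1) * (x + 1)" by (simp add: algebra_simps)
    ultimately show ?thesis using dvr_prime[OF U, of "x - 1" "x + 1"] by auto
  qed
  define cls where "cls x = {y. p dvd (y - x)}" for x
  have eqc: "cls x = cls c" if "p dvd (x - c)" for x c
  proof -
    have "p dvd (y - x) \<longleftrightarrow> p dvd (y - c)" for y
    proof -
      have "p dvd (y - c) \<longleftrightarrow> p dvd ((y - x) + (x - c))" by simp
      show ?thesis using dvd_add_left_iff[OF that, of "y - x"] by simp
    qed
    then show ?thesis unfolding cls_def by auto
  qed
  have "residue_field p \<subseteq> {cls 0, cls 1, cls (-1)}"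
  proof
    fix X assume "X \<in> residue_field p"
    then obtain x where x: "X = cls x" unfolding residue_field_def cls_def by auto
    show "X \<in> {cls 0, cls 1, cls (-1)}"
      using all[of x] eqc[of x 0] eqc[of x 1] eqc[of x "-1"] x by auto
  qed
  then have "card (residue_field p) \<le> card {cls 0, cls 1, cls (-1)}" by (intro card_mono) auto
  also have "\<dots> \<le> 3" by (simp add: card_insert_if)
  finally show False using C by simp
qed

theorem mainTheorem15:
  fixes \<pi> :: "'a::idom"
    and H :: "('a ^ 'n ^ 'n) set"
  assumes "dvr_uniformizer \<pi>"
    and "padic_complete \<pi>"
    and "equal_char \<pi>"
    and "finite (residue_field \<pi>)"
    and "card (residue_field \<pi>) > 9"
    and "CARD('n) \<ge> 2"
    and "normal H (SL :: ('a ^ 'n ^ 'n) monoid)"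
    and "SL_closed \<pi> H"
    and "surj_mod \<pi> H"
  shows "H = carrier (SL :: ('a ^ 'n ^ 'n) monoid)"
proof -
  note U = assms(1) and N = assms(7) and surj = assms(9)
  have G: "group (SL :: ('a^'n^'n) monoid)" and sub: "subgroup H (SL :: ('a^'n^'n) monoid)"
    using SL_group_facts[OF N] by blast+
  have p0: "\<pi> \<noteq> 0" using U unfolding dvr_uniformizer_def by simp
  obtain a0 where a0: "\<not> \<pi> dvd a0" "\<not> \<pi> dvd (a0*a0 - 1)"
    using exists_a0[OF U assms(4)] assms(5) by force
  obtain b0 where b0: "a0 * b0 = 1" using dvr_unit[OF U a0(1)] by (metis dvdE)
  obtain w where w: "(a0*a0 - 1) * w = 1" using dvr_unit[OF U a0(2)] by (metis dvdE)
  have el: "Sm \<pi> H m (sm c (EE k l) :: 'a^'n^'n)" if "m \<ge> 1" "k \<noteq> l" for m c k l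
    using Sm_EE[OF N that(1) surj that(2) b0 w] .
  have claim: "\<forall>A::'a^'n^'n. det A = 1 \<longrightarrow> (\<exists>h\<in>H. mc (\<pi>^m) A h)" for m
  proof (induction m)
    case 0
    have "mat 1 \<in> H" using subgroup.one_closed[OF sub] by simp
    then show ?case by (auto simp: mc_def)
  next
    case (Suc m)
    show ?case
    proof (intro allI impI)
      fix A :: "'a^'n^'n" assume dA: "det A = 1"
      show "\<exists>h\<in>H. mc (\<pi>^Suc m) A h"
      proof (cases "m = 0")
        case True
        have "\<pi> dvd (det A - 1)" using dA by simp
        then obtain h where "h \<in> H" "\<forall>i j. \<pi> dvd (A$i$j - h$i$j)" using surj unfolding surj_mod_def by blast
        then show ?thesis using True unfolding mc_def by auto
      next
        case False
        then have m: "m \<ge> 1" by simp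
        obtain h where h: "h \<in> H" "mc (\<pi>^m) A h" using Suc.IH dA by blast
        have dh: "det h = 1" using h(1) subgroup.subset[OF sub] by auto
        note hi = SL_inv[OF G dh]
        define B where "B = inv\<^bsub>SL\<^esub> h ** A"
        have dB: "det B = 1" unfolding B_def using hi(3) dA by (simp add: det_mul)
        have "mc (\<pi>^m) B (inv\<^bsub>SL\<^esub> h ** h)" unfolding B_def by (rule mc_multl[OF h(2)])
        then have Bc: "mc (\<pi>^m) B (mat 1)" using hi(2) by simp
        define Y :: "'a^'n^'n" where "Y = (\<chi> i j. SOME y. B$i$j - (mat 1::'a^'n^'n)$i$j = \<pi>^m * y)"
        have BY: "B = mat 1 + sm (\<pi>^m) Y"
        proof -
          have "B$i$j - (mat 1::'a^'n^'n)$i$j = \<pi>^m * Y$i$j" for i j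
          proof -
            have ex: "\<exists>y. B$i$j - (mat 1::'a^'n^'n)$i$j = \<pi>^m * y" using Bc unfolding mc_def by (meson dvdE)
            have Yij: "Y$i$j = (SOME y. B$i$j - (mat 1::'a^'n^'n)$i$j = \<pi>^m * y)"
              by (simp only: Y_def vec_lambda_beta)
            show ?thesis unfolding Yij by (rule someI_ex[OF ex])
          qed
          then have "B$i$j = (mat 1 + sm (\<pi>^m) Y)$i$j" for i j
            unfolding vector_add_component sm_comp by (metis diff_add_cancel add.commute)
          then show ?thesis by (simp add: vec_eq_iff)
        qed
        have "\<pi>^m * \<pi>^m dvd (det B - (1 + \<pi>^m * trace Y))" using det_lin[of "\<pi>^m" Y] BY by simp
        then have "\<pi>^m * \<pi>^m dvd \<pi>^m * trace Y" using dB by (simp add: dvd_minus_iff)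
        moreover have "\<pi>^m * \<pi> dvd \<pi>^m * \<pi>^m" using m
          by (intro mult_dvd_mono) (auto intro: dvd_power)
        ultimately have "\<pi>^m * \<pi> dvd \<pi>^m * trace Y" using dvd_trans by blast
        then have tr: "\<pi> dvd trace Y" using p0 by simp
        have "Sm \<pi> H m Y" by (rule Sm_traceless[OF N m surj el[OF m] tr])
        then obtain h' where h': "h' \<in> H" "mc (\<pi>^(m+1)) h' B" unfolding Sm_def BY by blast
        have hh: "h ** h' \<in> H" using subgroup.m_closed[OF sub h(1) h'(1)] by simp
        have "mc (\<pi>^(m+1)) (h ** h') (h ** B)" by (rule mc_multl[OF h'(2)])
        moreover have "h ** B = A" unfolding B_def using hi(1) by (simp add: matrix_mul_assoc)
        ultimately show ?thesis using hh mc_sym by auto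
      qed
    qed
  qed
  show ?thesis
  proof
    show "H \<subseteq> carrier SL" using subgroup.subset[OF sub] .
    show "carrier SL \<subseteq> H"
    proof
      fix A :: "'a^'n^'n" assume "A \<in> carrier SL"
      then have dA: "det A = 1" by simp
      have "\<forall>m. \<exists>h\<in>H. \<forall>i j. \<pi> ^ m dvd (A $ i $ j - h $ i $ j)"
        using claim dA unfolding mc_def by blast
      then show "A \<in> H" using assms(8) dA unfolding SL_closed_def by blast
    qed
  qed
qed

end
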